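(* Let $\mathcal{A}\subset\mathbb{Z}^2$ be finite with $\Delta_{\mathcal{A}}$ a polygon, and let $f\colon\mathcal{A}\to\mathbb{R}^2$ be compatible. Then for every edge $\delta$ of $\Delta_{\mathcal{A}}$ there exist $\mathbf{d},\mathbf{d}'\in\delta\cap\mathcal{A}$ and $\mathbf{a}\in\mathcal{A}\setminus\delta$ such that $f(\mathbf{d}),f(\mathbf{d}'),f(\mathbf{a})$ are affinely independent.
   Context: Write $\Delta_{\mathcal{A}}$ for the convex hull of $\mathcal{A}$. An affinely independent triple $p_0,p_1,p_2\in\mathbb{R}^2$ has orientation given by the sign of $\det(p_1-p_0,\,p_2-p_0)$; it is positively oriented if this determinant is positive. An assignment $f\colon\mathcal{A}\to\mathbb{R}^2$ is weakly compatible if both of the following hold: <ol> <li>There exist affinely independent $\mathbf{a}_0,\mathbf{a}_1,\mathbf{a}_2\in\mathcal{A}$ such that $f(\mathbf{a}_0),f(\mathbf{a}_1),f(\mathbf{a}_2)$ are affinely independent.</li> <li>For any affinely independent $\mathbf{a}'_0,\mathbf{a}'_1,\mathbf{a}'_2\in\mathcal{A}$ with the same orientation as $\mathbf{a}_0,\mathbf{a}_1,\mathbf{a}_2$: if $f(\mathbf{a}'_0),f(\mathbf{a}'_1),f(\mathbf{a}'_2)$ are affinely independent, then they have the same orientation as $f(\mathbf{a}_0),f(\mathbf{a}_1),f(\mathbf{a}_2)$.</li> </ol> The assignment $f$ is compatible if it is weakly compatible and no two distinct vertices of $\Delta_{\mathcal{A}}$ have the same image under $f$. *)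

theory Defs
  imports "HOL-Analysis.Analysis"
begin

definition det3 :: "real \<times> real \<Rightarrow> real \<times> real \<Rightarrow> real \<times> real \<Rightarrow> real" where
  "det3 p0 p1 p2 =
     (fst p1 - fst p0) * (snd p2 - snd p0) - (snd p1 - snd p0) * (fst p2 - fst p0)"

definition orient :: "real \<times> real \<Rightarrow> real \<times> real \<Rightarrow> real \<times> real \<Rightarrow> real" where
  "orient p0 p1 p2 = sgn (det3 p0 p1 p2)"

definition aff_indep3 :: "'a::real_vector \<Rightarrow> 'a \<Rightarrow> 'a \<Rightarrow> bool" where
  "aff_indep3 p0 p1 p2 \<longleftrightarrow> distinct [p0, p1, p2] \<and> \<not> affine_dependent {p0, p1, p2}"

definition weakly_compatible ::
  "(real \<times> real) set \<Rightarrow> (real \<times> real \<Rightarrow> real \<times> real) \<Rightarrow> bool" where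
  "weakly_compatible A f \<longleftrightarrow>
     (\<exists>a0\<in>A. \<exists>a1\<in>A. \<exists>a2\<in>A.
        aff_indep3 a0 a1 a2 \<and> aff_indep3 (f a0) (f a1) (f a2) \<and>
        (\<forall>b0\<in>A. \<forall>b1\<in>A. \<forall>b2\<in>A.
           aff_indep3 b0 b1 b2 \<and> orient b0 b1 b2 = orient a0 a1 a2 \<and>
           aff_indep3 (f b0) (f b1) (f b2) \<longrightarrow>
           orient (f b0) (f b1) (f b2) = orient (f a0) (f a1) (f a2)))"

text \<open>Vertices of the convex hull are its extreme points.\<close>
definition compatible ::
  "(real \<times> real) set \<Rightarrow> (real \<times> real \<Rightarrow> real \<times> real) \<Rightarrow> bool" where
  "compatible A f \<longleftrightarrow> weakly_compatible A f \<and>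
     inj_on f {v. v extreme_point_of (convex hull A)}"

end

theory Submission
  imports Defs
begin

lemma ai3_iff: "aff_indep3 p q r \<longleftrightarrow> \<not> collinear {p, q, r}"
  unfolding aff_indep3_def collinear_3_eq_affine_dependent by auto

theorem mainTheorem3:
  fixes A :: "(real \<times> real) set" and f :: "real \<times> real \<Rightarrow> real \<times> real"
  assumes "finite A"
    and "\<forall>p\<in>A. fst p \<in> \<int> \<and> snd p \<in> \<int>"
    and "aff_dim (convex hull A) = 2"
    and "compatible A f"
  shows "\<forall>\<delta>. \<delta> face_of (convex hull A) \<and> aff_dim \<delta> = 1 \<longrightarrow>
           (\<exists>d\<in>\<delta> \<inter> A. \<exists>d'\<in>\<delta> \<inter> A. \<exists>a\<in>A - \<delta>. aff_indep3 (f d) (f d') (f a))"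
proof (intro allI impI)
  fix \<delta> assume H: "\<delta> face_of (convex hull A) \<and> aff_dim \<delta> = 1"
  hence F: "\<delta> face_of (convex hull A)" and D1: "aff_dim \<delta> = 1" by auto
  have cpt: "compact (convex hull A)" using assms(1) by (simp add: compact_convex_hull finite_imp_compact)
  have cd: "compact \<delta>" using face_of_imp_compact[OF _ cpt F] by (simp add: convex_convex_hull)
  have cv: "convex \<delta>" using face_of_imp_convex[OF F] .
  define E where "E = {x. x extreme_point_of \<delta>}"
  have dE: "\<delta> = convex hull E" using Krein_Milman_Minkowski[OF cd cv] E_def by simp
  have "\<exists>v1\<in>E. \<exists>v2\<in>E. v1 \<noteq> v2"
  proof (rule ccontr)
    assume "\<not> ?thesis"
    then obtain v where "E \<subseteq> {v}" by blast
    hence "\<delta> \<subseteq> {v}" using dE by (metis convex_hull_eq_empty convex_hull_singleton hull_mono subset_singletonD)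
    hence "aff_dim \<delta> \<le> 0" by (metis aff_dim_sing aff_dim_subset)
    with D1 show False by simp
  qed
  then obtain v1 v2 where v: "v1 \<in> E" "v2 \<in> E" "v1 \<noteq> v2" by blast
  have ext: "v1 extreme_point_of (convex hull A)" "v2 extreme_point_of (convex hull A)"
    using v extreme_point_of_face[OF F] E_def by auto
  have vA: "v1 \<in> A" "v2 \<in> A" using ext extreme_point_of_convex_hull by auto
  have vd: "v1 \<in> \<delta>" "v2 \<in> \<delta>" using v E_def extreme_point_of_def by auto
  have fne: "f v1 \<noteq> f v2" using assms(4) ext v(3) unfolding compatible_def inj_on_def by (metis mem_Collect_eq)
  have "\<not> A \<subseteq> \<delta>"
  proof
    assume "A \<subseteq> \<delta>"
    hence "convex hull A \<subseteq> \<delta>" using cv by (simp add: hull_minimal)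
    hence "aff_dim (convex hull A) \<le> aff_dim \<delta>" by (rule aff_dim_subset)
    with D1 assms(3) show False by simp
  qed
  then obtain a0 where a0: "a0 \<in> A" "a0 \<notin> \<delta>" by blast
  show "\<exists>d\<in>\<delta> \<inter> A. \<exists>d'\<in>\<delta> \<inter> A. \<exists>a\<in>A - \<delta>. aff_indep3 (f d) (f d') (f a)"
  proof (rule ccontr)
    assume N: "\<not> ?thesis"
    hence col: "\<And>d d' a. d \<in> \<delta> \<Longrightarrow> d \<in> A \<Longrightarrow> d' \<in> \<delta> \<Longrightarrow> d' \<in> A \<Longrightarrow> a \<in> A \<Longrightarrow> a \<notin> \<delta>
        \<Longrightarrow> collinear {f d, f d', f a}" using ai3_iff by blast
    define L where "L = affine hull {f v1, f v2}"
    have aL: "affine L" unfolding L_def by simp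
    have out: "f a \<in> L" if "a \<in> A" "a \<notin> \<delta>" for a
      using col[OF vd(1) vA(1) vd(2) vA(2) that] collinear_3_affine_hull[OF fne] L_def by auto
    have v1L: "f v1 \<in> L" and v2L: "f v2 \<in> L" unfolding L_def by (auto intro: hull_inc)
    have inn: "f x \<in> L" if "x \<in> A" for x
    proof (cases "x \<in> \<delta>")
      case False thus ?thesis using out that by auto
    next
      case True
      have a0L: "f a0 \<in> L" using out a0 by auto
      show ?thesis
      proof (cases "f a0 = f v1")
        case False
        have "collinear {f v1, f a0, f x}"
          using col[OF vd(1) vA(1) True that a0] by (simp add: insert_commute)
        hence "f x \<in> affine hull {f v1, f a0}" using collinear_3_affine_hull False by metis
        moreover have "affine hull {f v1, f a0} \<subseteq> L" using aL a0L v1L by (simp add: hull_minimal)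
        ultimately show ?thesis by auto
      next
        case True2: True
        hence F2: "f a0 \<noteq> f v2" using fne by auto
        have "collinear {f v2, f a0, f x}"
          using col[OF vd(2) vA(2) True that a0] by (simp add: insert_commute)
        hence "f x \<in> affine hull {f v2, f a0}" using collinear_3_affine_hull F2 by metis
        moreover have "affine hull {f v2, f a0} \<subseteq> L" using aL a0L v2L by (simp add: hull_minimal)
        ultimately show ?thesis by auto
      qed
    qed
    have colL: "collinear L" unfolding L_def collinear_affine_hull_collinear by simp
    from assms(4) obtain b0 b1 b2 where b: "b0 \<in> A" "b1 \<in> A" "b2 \<in> A" "aff_indep3 (f b0) (f b1) (f b2)"
      unfolding compatible_def weakly_compatible_def by blast
    have "collinear {f b0, f b1, f b2}" using collinear_subset[OF colL] inn b by auto
    with b(4) ai3_iff show False by blast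
  qed
qed

end
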